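(* Every weakly mixing dynamical system $(X,T)$ is transitively sensitive.
   Context: A dynamical system $(X,T)$: $X$ is a compact metric space (metric $d$) with more than one point and without isolated points, $T:X\to X$ a continuous surjection. "Opene" means open and nonempty. $(X,T)$ is transitive if $N_T(U,V)=\{n\in\mathbb{Z}_+:U\cap T^{-n}V\neq\varnothing\}\neq\varnothing$ for all opene $U,V$; weakly mixing if $(X\times X,T\times T)$ is transitive. With $S_T(U,\delta)=\{n\in\mathbb{Z}_+:\exists x_1,x_2\in U,\ d(T^nx_1,T^nx_2)>\delta\}$, $(X,T)$ is transitively sensitive if there is $\delta>0$ with $S_T(W,\delta)\cap N_T(U,V)\neq\varnothing$ for all opene $U,V,W\subset X$. *)

theory Defs
  imports "HOL-Analysis.Analysis"
begin

definition dyn_system :: "'a::metric_space set \<Rightarrow> ('a \<Rightarrow> 'a) \<Rightarrow> bool" where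
  "dyn_system X T \<longleftrightarrow> compact X \<and> (\<exists>x\<in>X. \<exists>y\<in>X. x \<noteq> y) \<and>
     (\<forall>x\<in>X. x islimpt X) \<and> continuous_on X T \<and> T ` X = X"

definition opene :: "'a::topological_space set \<Rightarrow> 'a set \<Rightarrow> bool" where
  "opene X U \<longleftrightarrow> openin (top_of_set X) U \<and> U \<noteq> {}"

definition hitting_times :: "'a set \<Rightarrow> ('a \<Rightarrow> 'a) \<Rightarrow> 'a set \<Rightarrow> 'a set \<Rightarrow> nat set" where
  "hitting_times X T U V = {n. U \<inter> {x\<in>X. (T ^^ n) x \<in> V} \<noteq> {}}"

definition transitive_sys :: "'a::topological_space set \<Rightarrow> ('a \<Rightarrow> 'a) \<Rightarrow> bool" where
  "transitive_sys X T \<longleftrightarrow> (\<forall>U V. opene X U \<and> opene X V \<longrightarrow> hitting_times X T U V \<noteq> {})"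

definition weakly_mixing :: "'a::topological_space set \<Rightarrow> ('a \<Rightarrow> 'a) \<Rightarrow> bool" where
  "weakly_mixing X T \<longleftrightarrow> transitive_sys (X \<times> X) (\<lambda>(x, y). (T x, T y))"

definition sensitive_times :: "('a \<Rightarrow> 'a) \<Rightarrow> 'a::metric_space set \<Rightarrow> real \<Rightarrow> nat set" where
  "sensitive_times T U \<delta> = {n. \<exists>x1\<in>U. \<exists>x2\<in>U. dist ((T ^^ n) x1) ((T ^^ n) x2) > \<delta>}"

definition transitively_sensitive :: "'a::metric_space set \<Rightarrow> ('a \<Rightarrow> 'a) \<Rightarrow> bool" where
  "transitively_sensitive X T \<longleftrightarrow> (\<exists>\<delta>>0. \<forall>U V W. opene X U \<and> opene X V \<and> opene X W \<longrightarrow>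
      sensitive_times T W \<delta> \<inter> hitting_times X T U V \<noteq> {})"

end

theory Submission
  imports Defs
begin

lemma funpow_cont:
  assumes "continuous_on X T" "T ` X = X"
  shows "continuous_on X (T ^^ k) \<and> (T ^^ k) ` X \<subseteq> X"
proof (induction k)
  case 0 then show ?case by (simp add: continuous_on_id)
next
  case (Suc k)
  have e: "T ^^ Suc k = T \<circ> (T ^^ k)" by simp
  have "continuous_on X (T \<circ> (T ^^ k))"
    using Suc assms by (intro continuous_on_compose) (auto intro: continuous_on_subset)
  moreover have "(T \<circ> (T ^^ k)) ` X \<subseteq> X" using Suc assms by auto
  ultimately show ?case by (simp only: e)
qed

lemma funpow_prod:
  fixes T :: "'a \<Rightarrow> 'a" and n :: nat
  shows "((\<lambda>(x, y). (T x, T y)) ^^ n) (x, y) = ((T ^^ n) x, (T ^^ n) y)"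
  by (induction n) auto

lemma preimage_opene:
  assumes "continuous_on X T" "T ` X = X" "openin (top_of_set X) V"
  shows "openin (top_of_set X) {x\<in>X. (T ^^ k) x \<in> V}"
proof -
  have "openin (top_of_set X) (X \<inter> (T ^^ k) -` V)"
    using funpow_cont[OF assms(1,2), of k] assms(3)
    by (intro continuous_openin_preimage) auto
  moreover have "X \<inter> (T ^^ k) -` V = {x\<in>X. (T ^^ k) x \<in> V}" by auto
  ultimately show ?thesis by simp
qed

lemma wm_pair:
  assumes "weakly_mixing X T" "opene X A" "opene X B" "opene X C" "opene X D"
  obtains n x y where "x \<in> A" "(T ^^ n) x \<in> C" "y \<in> B" "(T ^^ n) y \<in> D"
proof -
  have o1: "opene (X \<times> X) (A \<times> B)"
    using assms(2,3) unfolding opene_def using openin_Times[of X A X B] by simp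
  have o2: "opene (X \<times> X) (C \<times> D)"
    using assms(4,5) unfolding opene_def using openin_Times[of X C X D] by simp
  have "hitting_times (X \<times> X) (\<lambda>(x, y). (T x, T y)) (A \<times> B) (C \<times> D) \<noteq> {}"
    using assms(1) o1 o2 unfolding weakly_mixing_def transitive_sys_def by simp
  then obtain n where "n \<in> hitting_times (X \<times> X) (\<lambda>(x, y). (T x, T y)) (A \<times> B) (C \<times> D)"
    by blast
  then have "(A \<times> B) \<inter> {z \<in> X \<times> X. ((\<lambda>(x, y). (T x, T y)) ^^ n) z \<in> C \<times> D} \<noteq> {}"
    unfolding hitting_times_def by (rule CollectD)
  then obtain z where "z \<in> (A \<times> B) \<inter> {z \<in> X \<times> X. ((\<lambda>(x, y). (T x, T y)) ^^ n) z \<in> C \<times> D}"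
    by (meson ex_in_conv)
  then have z: "z \<in> A \<times> B" "((\<lambda>(x, y). (T x, T y)) ^^ n) z \<in> C \<times> D"
    by (simp_all only: Int_iff mem_Collect_eq)
  obtain x y where zxy: "z = (x, y)" by fastforce
  have "x \<in> A" "y \<in> B" using z(1) zxy by auto
  moreover have "(T ^^ n) x \<in> C" "(T ^^ n) y \<in> D"
    using z(2) zxy funpow_prod[where T=T and n=n and x=x and y=y] by auto
  ultimately show ?thesis using that by metis
qed

theorem proposition4p5:
  fixes X :: "'a::metric_space set" and T :: "'a \<Rightarrow> 'a"
  assumes "dyn_system X T"
    and "weakly_mixing X T"
  shows "transitively_sensitive X T"
proof -
  from assms(1) obtain a b where ab: "a \<in> X" "b \<in> X" "a \<noteq> b"
    and cont: "continuous_on X T" and surj: "T ` X = X"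
    unfolding dyn_system_def by blast
  define \<delta> where "\<delta> = dist a b / 4"
  have dpos: "\<delta> > 0" using ab by (simp add: \<delta>_def)
  define A where "A = X \<inter> ball a \<delta>"
  define B where "B = X \<inter> ball b \<delta>"
  have oA: "opene X A" using ab dpos unfolding A_def opene_def
    by (auto intro: openin_open_Int)
  have oB: "opene X B" using ab dpos unfolding B_def opene_def
    by (auto intro: openin_open_Int)
  have "\<forall>U V W. opene X U \<and> opene X V \<and> opene X W \<longrightarrow>
      sensitive_times T W \<delta> \<inter> hitting_times X T U V \<noteq> {}"
  proof (intro allI impI)
    fix U V W assume H: "opene X U \<and> opene X V \<and> opene X W"
    have WX: "W \<subseteq> X" "U \<subseteq> X" using H unfolding opene_def by (auto dest: openin_imp_subset)
    obtain k x0 y0 where k: "x0 \<in> W" "(T ^^ k) x0 \<in> W" "y0 \<in> A" "(T ^^ k) y0 \<in> B"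
      using wm_pair[OF assms(2) _ oA _ oB, of W] H by blast
    define W' where "W' = W \<inter> {x\<in>X. (T ^^ k) x \<in> W}"
    define A' where "A' = A \<inter> {x\<in>X. (T ^^ k) x \<in> B}"
    have "opene X W'" unfolding W'_def opene_def
      using H k WX preimage_opene[OF cont surj, of W k] unfolding opene_def by auto
    moreover have "opene X A'" unfolding A'_def opene_def
      using oA oB k preimage_opene[OF cont surj, of B k] unfolding opene_def A_def by auto
    ultimately obtain n x u where n: "x \<in> W'" "(T ^^ n) x \<in> A'" "u \<in> U" "(T ^^ n) u \<in> V"
      using wm_pair[OF assms(2), of W' U A' V] H by blast
    have hit: "n \<in> hitting_times X T U V"
      using n WX unfolding hitting_times_def by auto
    have x1: "x \<in> W" "(T ^^ n) x \<in> A" using n unfolding W'_def A'_def by auto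
    have x2: "(T ^^ k) x \<in> W" using n unfolding W'_def by auto
    have "(T ^^ k) ((T ^^ n) x) \<in> B" using n unfolding A'_def by auto
    moreover have "(T ^^ k) ((T ^^ n) x) = (T ^^ n) ((T ^^ k) x)"
      by (metis add.commute comp_apply funpow_add)
    ultimately have x3: "(T ^^ n) ((T ^^ k) x) \<in> B" by simp
    have "dist ((T ^^ n) x) ((T ^^ n) ((T ^^ k) x)) > \<delta>"
    proof -
      have "dist a ((T ^^ n) x) < \<delta>" using x1 unfolding A_def by auto
      moreover have "dist b ((T ^^ n) ((T ^^ k) x)) < \<delta>" using x3 unfolding B_def by auto
      moreover have "dist a b \<le> dist a ((T ^^ n) x) + dist ((T ^^ n) x) ((T ^^ n) ((T ^^ k) x))
           + dist b ((T ^^ n) ((T ^^ k) x))"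
        using dist_triangle[of a b "(T ^^ n) x"] dist_triangle[of "(T ^^ n) x" b "(T ^^ n) ((T ^^ k) x)"]
          dist_commute[of b "(T ^^ n) ((T ^^ k) x)"] by linarith
      moreover have "dist a b > 0" using ab by simp
      ultimately show ?thesis unfolding \<delta>_def by linarith
    qed
    then have "n \<in> sensitive_times T W \<delta>"
      unfolding sensitive_times_def using x1 x2 by blast
    with hit show "sensitive_times T W \<delta> \<inter> hitting_times X T U V \<noteq> {}" by blast
  qed
  then show ?thesis unfolding transitively_sensitive_def using dpos by blast
qed

end
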